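(* Let $p$ be an odd prime, $q\in\mathbb{C}_p$ with $|q-1|_p<1$, $\alpha\in\mathbb{N}\cup\{0\}$, $h\in\mathbb{N}$. Let $s\in\mathbb{N}$ with $s\ge2$ and let $n_1,\dots,n_s,k$ be nonnegative integers with $\sum_{l=1}^s n_l>sk$. Then \[ \sum_{l=0}^{n_1+\cdots+n_s-sk}\binom{\sum_{d=1}^s(n_d-k)}{l}(-1)^l\frac{\widetilde{G}_{l+sk+1,q}^{(\alpha,h)}}{l+sk+1}=\begin{cases}[2]_q+q^{h+1}\dfrac{\widetilde{G}_{n_1+\cdots+n_s+1,q^{-1}}^{(\alpha,h)}}{n_1+\cdots+n_s+1} & \text{if } k=0,\\[2mm] \displaystyle\sum_{l=0}^{sk}\binom{sk}{l}(-1)^{sk+l}\Big\{[2]_q+q^{h+1}\frac{\widetilde{G}_{n_1+\cdots+n_s-l+1,q^{-1}}^{(\alpha,h)}}{n_1+\cdots+n_s-l+1}\Big\} & \text{if } k\neq 0.\end{cases} \]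
   Context: For $x\in\mathbb{Z}_p$ write $[x]_q=\frac{1-q^x}{1-q}$, and $[2]_q=1+q$. For a uniformly differentiable $f:\mathbb{Z}_p\to\mathbb{C}_p$, the fermionic $p$-adic $q$-integral is $\int_{\mathbb{Z}_p}f(\xi)\,d\mu_{-q}(\xi)=\lim_{N\to\infty}\frac{1}{[p^N]_{-q}}\sum_{\xi=0}^{p^N-1}f(\xi)(-q)^{\xi}$, with $[p^N]_{-q}=\frac{1+q^{p^N}}{1+q}$. The $(h,q)$-Genocchi polynomials with weight $\alpha$ are defined for $n\ge0$, $x\in\mathbb{Z}_p$ by $\frac{\widetilde{G}_{n+1,q}^{(\alpha,h)}(x)}{n+1}=\int_{\mathbb{Z}_p}q^{(h-1)\xi}[x+\xi]_{q^{\alpha}}^n\,d\mu_{-q}(\xi)$, and the numbers are $\widetilde{G}_{n,q}^{(\alpha,h)}=\widetilde{G}_{n,q}^{(\alpha,h)}(0)$. The numbers $\widetilde{G}_{n,q^{-1}}^{(\alpha,h)}$ are obtained by replacing $q$ by $q^{-1}$ everywhere: $\frac{\widetilde{G}_{n+1,q^{-1}}^{(\alpha,h)}}{n+1}=\int_{\mathbb{Z}_p}q^{(1-h)\xi}[\xi]_{q^{-\alpha}}^n\,d\mu_{-q^{-1}}(\xi)$. *)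

theory Defs
  imports Complex_Main "HOL-Computational_Algebra.Polynomial" "HOL-Computational_Algebra.Primes"
begin

text \<open>Abstract model of C_p: a field of characteristic 0 with a non-archimedean
absolute value absv, complete, algebraically closed, and normalized by absv p = 1/p
(so that absv restricts to the p-adic absolute value on the rationals).\<close>

definition nonarch_absv :: "('a::field \<Rightarrow> real) \<Rightarrow> bool" where
  "nonarch_absv absv \<longleftrightarrow>
     (\<forall>x. absv x \<ge> 0) \<and> (\<forall>x. absv x = 0 \<longleftrightarrow> x = 0) \<and>
     (\<forall>x y. absv (x * y) = absv x * absv y) \<and>
     (\<forall>x y. absv (x + y) \<le> max (absv x) (absv y))"

definition absv_complete :: "('a::field \<Rightarrow> real) \<Rightarrow> bool" where
  "absv_complete absv \<longleftrightarrow>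
     (\<forall>S::nat \<Rightarrow> 'a. (\<forall>e>0. \<exists>M. \<forall>m\<ge>M. \<forall>n\<ge>M. absv (S m - S n) < e)
        \<longrightarrow> (\<exists>L. (\<lambda>n. absv (S n - L)) \<longlonglongrightarrow> 0))"

definition alg_closed_field :: "'a::field itself \<Rightarrow> bool" where
  "alg_closed_field _ \<longleftrightarrow> (\<forall>P::'a poly. degree P > 0 \<longrightarrow> (\<exists>z. poly P z = 0))"

definition Cp_field :: "('a::field_char_0 \<Rightarrow> real) \<Rightarrow> nat \<Rightarrow> bool" where
  "Cp_field absv p \<longleftrightarrow> nonarch_absv absv \<and> absv_complete absv \<and>
     alg_closed_field TYPE('a) \<and> absv (of_nat p) = 1 / real p"

definition qint :: "'a::field \<Rightarrow> nat \<Rightarrow> 'a" where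
  "qint q x = (if q = 1 then of_nat x else (1 - q ^ x) / (1 - q))"

definition ferm_int :: "('a::field_char_0 \<Rightarrow> real) \<Rightarrow> nat \<Rightarrow> 'a \<Rightarrow> (nat \<Rightarrow> 'a) \<Rightarrow> 'a" where
  "ferm_int absv p q f = (THE L. (\<lambda>N. absv ((\<Sum>\<xi><p ^ N. f \<xi> * (- q) ^ \<xi>) / qint (- q) (p ^ N) - L))
                              \<longlonglongrightarrow> 0)"

text \<open>(h,q)-Genocchi numbers with weight alpha: G_{n+1}/(n+1) = integral of
q^((h-1)xi) [xi]_{q^alpha}^n d mu_{-q}(xi).  G_0 is not used (set to 0).
The q^{-1} numbers are genocchi ... (inverse q).\<close>
fun genocchi :: "('a::field_char_0 \<Rightarrow> real) \<Rightarrow> nat \<Rightarrow> nat \<Rightarrow> nat \<Rightarrow> 'a \<Rightarrow> nat \<Rightarrow> 'a" where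
  "genocchi absv p \<alpha> h q 0 = 0"
| "genocchi absv p \<alpha> h q (Suc n) =
     of_nat (Suc n) * ferm_int absv p q (\<lambda>\<xi>. q ^ ((h - 1) * \<xi>) * qint (q ^ \<alpha>) \<xi> ^ n)"

end

theory Submission
  imports Defs
begin

locale cpx =
  fixes absv :: "'a::field_char_0 \<Rightarrow> real" and p :: nat and \<rho> :: real
  assumes na: "nonarch_absv absv" and cpl: "absv_complete absv"
    and pr: "prime p" and od: "odd p" and ap: "absv (of_nat p) = 1 / real p"
    and rho1: "1 / real p \<le> \<rho>" and rho2: "\<rho> < 1"
begin

lemma av_nonneg[simp]: "absv x \<ge> 0" using na unfolding nonarch_absv_def by blast
lemma av_0_iff[simp]: "absv x = 0 \<longleftrightarrow> x = 0" using na unfolding nonarch_absv_def by blast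
lemma av_mult: "absv (x * y) = absv x * absv y" using na unfolding nonarch_absv_def by blast
lemma av_add: "absv (x + y) \<le> max (absv x) (absv y)" using na unfolding nonarch_absv_def by blast
lemma av_1[simp]: "absv 1 = 1"
proof -
  have "absv 1 = absv 1 * absv 1" using av_mult[of 1 1] by simp
  moreover have "absv 1 \<noteq> 0" by simp
  ultimately show ?thesis by (metis mult_cancel_left1)
qed
lemma av_0[simp]: "absv 0 = 0" by simp
lemma av_m1[simp]: "absv (-1) = 1"
proof -
  have "absv (-1) * absv (-1) = 1" using av_mult[of "-1" "-1"] by simp
  thus ?thesis using av_nonneg[of "-1"]
    by (metis abs_of_nonneg real_sqrt_abs2 real_sqrt_one)
qed
lemma av_minus[simp]: "absv (- x) = absv x"
  using av_mult[of "-1" x] by simp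
lemma av_commute: "absv (x - y) = absv (y - x)"
  by (metis av_minus minus_diff_eq)
lemma av_diff: "absv (x - y) \<le> max (absv x) (absv y)"
  using av_add[of x "-y"] by simp
lemma av_tri: "absv (x + y) \<le> absv x + absv y"
  using av_add[of x y] av_nonneg[of x] av_nonneg[of y] by linarith
lemma av_power: "absv (x ^ n) = absv x ^ n"
  by (induction n) (simp_all add: av_mult)
lemma av_inverse: "absv (inverse x) = inverse (absv x)"
proof (cases "x = 0")
  case False
  have "absv (inverse x) * absv x = 1" using av_mult[of "inverse x" x] False by simp
  moreover have "absv x \<noteq> 0" using False by simp
  ultimately show ?thesis by (metis inverse_unique mult.commute)
qed simp
lemma av_divide: "absv (x / y) = absv x / absv y"
  by (simp add: divide_inverse av_mult av_inverse)
lemma av_of_nat_le1: "absv (of_nat n) \<le> 1"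
proof (induction n)
  case (Suc n)
  then show ?case using av_add[of 1 "of_nat n"] by (simp add: algebra_simps)
qed simp
lemma av_of_int_le1: "absv (of_int n) \<le> 1"
  by (metis av_minus av_of_nat_le1 of_int_of_nat)

lemma av_le_trans: "absv (x + y) \<le> b" if "absv x \<le> b" "absv y \<le> b"
  using av_add[of x y] that by linarith
lemma av_le_diff: "absv (x - y) \<le> b" if "absv x \<le> b" "absv y \<le> b"
  using av_diff[of x y] that by linarith

lemma av_sum: "absv (sum f A) \<le> b" if "\<And>i. i \<in> A \<Longrightarrow> absv (f i) \<le> b" "0 \<le> b"
  using that
proof (induction A rule: infinite_finite_induct)
  case (insert x F)
  then show ?case by (simp add: av_le_trans)
qed simp_all

lemma av_strict: "absv (x + y) = absv x" if "absv y < absv x"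
proof -
  have "absv x \<le> max (absv (x + y)) (absv y)" using av_diff[of "x + y" y] by simp
  hence "absv x \<le> absv (x + y)" using that by linarith
  moreover have "absv (x + y) \<le> absv x" using av_add[of x y] that by linarith
  ultimately show ?thesis by linarith
qed

lemma p_pos: "p > 1" using pr prime_gt_1_nat by blast
lemma rho0: "0 \<le> \<rho>" proof -
  have "0 \<le> 1 / real p" by simp
  thus ?thesis using rho1 by linarith
qed

lemma av_2: "absv 2 = 1"
proof (rule ccontr)
  assume "absv 2 \<noteq> 1"
  moreover have "absv 2 \<le> 1" using av_of_nat_le1[of 2] by simp
  ultimately have lt: "absv 2 < 1" by simp
  obtain m where pm: "p = 2 * m + 1" using od oddE by blast
  have "(1::'a) = of_nat p - 2 * of_nat m" by (simp add: pm)
  hence "absv (1::'a) \<le> max (absv (of_nat p)) (absv (2 * of_nat m))" by (metis av_diff)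
  moreover have "absv (2 * (of_nat m::'a)) < 1" using lt av_of_nat_le1[of m]
  proof -
    have "absv (2::'a) * absv (of_nat m::'a) \<le> absv (2::'a) * 1"
      using av_of_nat_le1[of m] by (intro mult_left_mono) auto
    thus ?thesis using lt by (simp add: av_mult)
  qed
  moreover have "absv (of_nat p :: 'a) < 1" using ap p_pos by simp
  ultimately have "absv (1::'a) < 1" by linarith
  thus False by simp
qed

lemma av_p_pow: "absv (of_nat (p ^ N * j) :: 'a) \<le> \<rho> ^ N"
proof -
  have "absv (of_nat (p ^ N * j) :: 'a) = (1 / real p) ^ N * absv (of_nat j :: 'a)"
    by (simp add: av_mult av_power ap)
  also have "\<dots> \<le> (1 / real p) ^ N" using av_of_nat_le1[of j]
    by (simp add: mult_left_le)
  also have "\<dots> \<le> \<rho> ^ N" using rho1 by (simp add: power_mono)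
  finally show ?thesis .
qed


end

lemma qint_sum: "qint a n = (\<Sum>j<n. a ^ j)"
  by (simp add: qint_def sum_gp_strict)

lemma qint_0[simp]: "qint a 0 = 0" by (simp add: qint_sum)

lemma qint_Suc: "qint a (Suc n) = 1 + a * qint a n"
  unfolding qint_sum sum.lessThan_Suc_shift by (simp add: sum_distrib_left)

lemma qint_1[simp]: "qint a 1 = 1" by (simp add: qint_sum)

lemma qint_add: "qint a (m + n) = qint a m + a ^ m * qint a n"
  by (induction n) (simp_all add: qint_sum sum_distrib_left power_add algebra_simps)

lemma qint_mult: "qint a (m * n) = qint a m * qint (a ^ m) n"
proof (induction n)
  case (Suc n)
  have "qint a (m * Suc n) = qint a (m * n + m)" by (simp add: algebra_simps)
  also have "\<dots> = qint a m * qint (a ^ m) n + a ^ (m * n) * qint a m" using Suc by (simp add: qint_add)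
  also have "\<dots> = qint a m * qint (a ^ m) (Suc n)"
    by (simp add: qint_sum power_mult algebra_simps sum_distrib_left)
  finally show ?case .
qed simp

lemma pow_m1: "a ^ n - 1 = (a - 1) * qint a n"
  by (simp add: qint_sum power_diff_1_eq)

context cpx begin

lemma qint_le1: "absv a \<le> 1 \<Longrightarrow> absv (qint a n) \<le> 1"
  unfolding qint_sum by (rule av_sum) (simp_all add: av_power power_le_one)

lemma av_one: "absv (a - 1) < 1 \<Longrightarrow> absv a = 1"
  using av_strict[of "a - 1" 1] by simp

lemma pow_close: "absv a \<le> 1 \<Longrightarrow> absv (a ^ n - 1) \<le> absv (a - 1)"
  using qint_le1[of a n] by (simp add: pow_m1 av_mult mult_left_le)

lemma qint_p: assumes "absv (a - 1) \<le> \<rho>" shows "absv (qint a p) \<le> \<rho>"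
proof -
  have a1: "absv a = 1" using av_one assms rho2 by simp
  have e: "qint a p = of_nat p + (\<Sum>j<p. a ^ j - 1)" by (simp add: qint_sum sum_subtractf)
  have "absv (\<Sum>j<p. a ^ j - 1) \<le> \<rho>"
  proof (rule av_sum)
    fix i show "absv (a ^ i - 1) \<le> \<rho>" using pow_close[of a i] a1 assms by simp
  qed (rule rho0)
  moreover have "absv (of_nat p :: 'a) \<le> \<rho>" using ap rho1 by simp
  ultimately show ?thesis unfolding e by (rule av_le_trans[rotated])
qed

lemma qint_ppow1: assumes "absv (a - 1) \<le> \<rho>" shows "absv (qint a (p ^ N)) \<le> \<rho> ^ N"
proof (induction N)
  case (Suc N)
  have a1: "absv a = 1" using av_one assms rho2 by simp
  have "absv (a ^ p ^ N - 1) \<le> absv (a - 1)" using pow_close[of a] a1 by simp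
  hence "absv (a ^ p ^ N - 1) \<le> \<rho>" using assms by linarith
  hence "absv (qint (a ^ p ^ N) p) \<le> \<rho>" by (rule qint_p)
  hence "absv (qint a (p ^ N)) * absv (qint (a ^ p ^ N) p) \<le> \<rho> ^ N * \<rho>"
    using Suc by (intro mult_mono) (simp_all add: rho0)
  moreover have "p ^ Suc N = p ^ N * p" by simp
  ultimately show ?case by (simp only: qint_mult av_mult power_Suc2)
qed (simp add: qint_sum)

lemma qint_ppow: assumes "absv (a - 1) \<le> \<rho>" shows "absv (qint a (p ^ N * j)) \<le> \<rho> ^ N"
proof -
  have a1: "absv a = 1" using av_one assms rho2 by simp
  have "absv (qint (a ^ p ^ N) j) \<le> 1" by (rule qint_le1) (simp add: av_power a1)
  hence "absv (qint a (p ^ N)) * absv (qint (a ^ p ^ N) j) \<le> \<rho> ^ N * 1"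
    using qint_ppow1[OF assms] by (intro mult_mono) (simp_all add: rho0)
  thus ?thesis by (simp add: qint_mult av_mult)
qed

lemma pow_ppow: assumes "absv (a - 1) \<le> \<rho>" shows "absv (a ^ (p ^ N * j) - 1) \<le> \<rho> ^ N"
proof -
  have "absv (a - 1) * absv (qint a (p ^ N * j)) \<le> 1 * \<rho> ^ N"
    using qint_ppow[OF assms] assms rho2 by (intro mult_mono) simp_all
  thus ?thesis by (simp add: pow_m1 av_mult)
qed

definition good :: "(nat \<Rightarrow> 'a) \<Rightarrow> bool" where
  "good f \<longleftrightarrow> (\<forall>\<xi>. absv (f \<xi>) \<le> 1) \<and> (\<forall>\<xi> N j. absv (f (\<xi> + p ^ N * j) - f \<xi>) \<le> \<rho> ^ N)"

lemma goodD1: "good f \<Longrightarrow> absv (f \<xi>) \<le> 1" unfolding good_def by blast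
lemma goodD2: "good f \<Longrightarrow> absv (f (\<xi> + p ^ N * j) - f \<xi>) \<le> \<rho> ^ N" unfolding good_def by blast

lemma good_1: "good (\<lambda>_. 1)" unfolding good_def using rho0 by simp

lemma prod_close: assumes "absv x \<le> 1" "absv y \<le> 1" "absv x' \<le> 1" "absv y' \<le> 1"
  "absv (x' - x) \<le> b" "absv (y' - y) \<le> b"
  shows "absv (x' * y' - x * y) \<le> b"
proof -
  have e: "x' * y' - x * y = x' * (y' - y) + (x' - x) * y" by (simp add: algebra_simps)
  have "absv x' * absv (y' - y) \<le> 1 * b" using assms by (intro mult_mono) auto
  hence "absv (x' * (y' - y)) \<le> b" by (simp add: av_mult)
  moreover have "absv (x' - x) * absv y \<le> b * 1" using assms by (intro mult_mono) (auto intro: order.trans[OF av_nonneg])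
  hence "absv ((x' - x) * y) \<le> b" by (simp add: av_mult)
  ultimately show ?thesis unfolding e by (rule av_le_trans)
qed

lemma good_mult: "good f \<Longrightarrow> good g \<Longrightarrow> good (\<lambda>\<xi>. f \<xi> * g \<xi>)"
  unfolding good_def
  by (auto simp: av_mult intro!: prod_close mult_le_one)

lemma good_pow: "good f \<Longrightarrow> good (\<lambda>\<xi>. f \<xi> ^ n)"
proof (induction n)
  case 0 thus ?case using good_1 by simp
next
  case (Suc n)
  thus ?case using good_mult[of f "\<lambda>\<xi>. f \<xi> ^ n"] by simp
qed

lemma good_1m: "good f \<Longrightarrow> good (\<lambda>\<xi>. 1 - f \<xi>)"
  unfolding good_def
proof (intro conjI allI)
  fix \<xi> N j
  assume g: "(\<forall>\<xi>. absv (f \<xi>) \<le> 1) \<and> (\<forall>\<xi> N j. absv (f (\<xi> + p ^ N * j) - f \<xi>) \<le> \<rho> ^ N)"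
  have "1 - f (\<xi> + p ^ N * j) - (1 - f \<xi>) = - (f (\<xi> + p ^ N * j) - f \<xi>)" by simp
  thus "absv (1 - f (\<xi> + p ^ N * j) - (1 - f \<xi>)) \<le> \<rho> ^ N" using g by (simp only: av_minus)
  show "absv (1 - f \<xi>) \<le> 1" using g by (intro av_le_diff) auto
qed

lemma good_exp: assumes "absv (a - 1) \<le> \<rho>" shows "good (\<lambda>\<xi>. a ^ \<xi>)"
proof -
  have a1: "absv a = 1" using av_one assms rho2 by simp
  show ?thesis unfolding good_def
  proof (intro conjI allI)
    fix \<xi> N j
    have "a ^ (\<xi> + p ^ N * j) - a ^ \<xi> = a ^ \<xi> * (a ^ (p ^ N * j) - 1)" by (simp add: power_add algebra_simps)
    thus "absv (a ^ (\<xi> + p ^ N * j) - a ^ \<xi>) \<le> \<rho> ^ N" using pow_ppow[OF assms] by (simp add: av_mult av_power a1)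
  qed (simp add: av_power a1)
qed

lemma good_qint: assumes "absv (a - 1) \<le> \<rho>" shows "good (\<lambda>\<xi>. qint a \<xi>)"
proof -
  have a1: "absv a = 1" using av_one assms rho2 by simp
  show ?thesis unfolding good_def
  proof (intro conjI allI)
    fix \<xi> N j
    have "qint a (\<xi> + p ^ N * j) - qint a \<xi> = a ^ \<xi> * qint a (p ^ N * j)" by (simp add: qint_add)
    thus "absv (qint a (\<xi> + p ^ N * j) - qint a \<xi>) \<le> \<rho> ^ N" using qint_ppow[OF assms] by (simp add: av_mult av_power a1)
  qed (simp add: qint_le1 a1)
qed


lemma sum_split: fixes h :: "nat \<Rightarrow> 'b::comm_monoid_add" shows "(\<Sum>\<xi><P * m. h \<xi>) = (\<Sum>i<m. \<Sum>\<xi><P. h (\<xi> + P * i))"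
proof -
  have "(\<Sum>\<xi><P * m. h \<xi>) = (\<Sum>i<m. sum h {i * P..<i * P + P})"
    using sum.nat_group[where g=h and k=P and n=m] by (simp add: mult.commute)
  also have "\<dots> = (\<Sum>i<m. \<Sum>\<xi><P. h (\<xi> + P * i))"
  proof (rule sum.cong[OF refl])
    fix i
    have "sum h {i * P..<i * P + P} = sum h {0 + i * P..<P + i * P}" by (simp add: add.commute)
    also have "\<dots> = (\<Sum>\<xi>\<in>{0..<P}. h (\<xi> + i * P))" by (rule sum.shift_bounds_nat_ivl)
    finally show "sum h {i * P..<i * P + P} = (\<Sum>\<xi><P. h (\<xi> + P * i))"
      by (simp add: atLeast0LessThan mult.commute)
  qed
  finally show ?thesis .
qed

lemma av_1plus: "absv (x - 1) < 1 \<Longrightarrow> absv (1 + x) = 1"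
  using av_strict[of "x - 1" 2] av_2 by (simp add: algebra_simps)

lemma odd_pN: "odd (p ^ N)" using od by simp

lemma qint_negb: assumes "absv (b - 1) \<le> \<rho>"
  shows "qint (- b) (p ^ N) = (1 + b ^ p ^ N) / (1 + b)" "absv (qint (- b) (p ^ N)) = 1"
proof -
  have b1: "absv b = 1" using av_one assms rho2 by simp
  have "absv (b - 1) < 1" using assms rho2 by simp
  hence bb: "absv (1 + b) = 1" by (rule av_1plus)
  have "b \<noteq> -1" using bb by (metis add.commute av_0_iff neg_eq_iff_add_eq_0 zero_neq_one)
  hence nb: "- b \<noteq> 1" by (metis minus_minus)
  have "(- b) ^ p ^ N = - (b ^ p ^ N)" using odd_pN by (simp add: power_minus_odd)
  thus e: "qint (- b) (p ^ N) = (1 + b ^ p ^ N) / (1 + b)" using nb by (simp add: qint_def)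
  have "absv (b ^ p ^ N - 1) \<le> absv (b - 1)" using pow_close b1 by simp
  hence "absv (b ^ p ^ N - 1) < 1" using assms rho2 by simp
  hence "absv (1 + b ^ p ^ N) = 1" by (rule av_1plus)
  thus "absv (qint (- b) (p ^ N)) = 1" unfolding e av_divide bb by simp
qed

definition Sq :: "'a \<Rightarrow> (nat \<Rightarrow> 'a) \<Rightarrow> nat \<Rightarrow> 'a" where
  "Sq b f N = (\<Sum>\<xi><p ^ N. f \<xi> * (- b) ^ \<xi>) / qint (- b) (p ^ N)"

lemma Sq_step: assumes g: "good f" and b: "absv (b - 1) \<le> \<rho>"
  shows "absv (Sq b f (Suc N) - Sq b f N) \<le> \<rho> ^ N"
proof -
  define P where "P = p ^ N"
  define c where "c = - b"
  define Q0 where "Q0 = qint c P"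
  define R where "R = qint (c ^ P) p"
  have Q0: "absv Q0 = 1" unfolding Q0_def P_def c_def using qint_negb[OF b] by simp
  have Q1e: "qint c (p ^ Suc N) = Q0 * R" unfolding Q0_def R_def P_def
    by (simp add: qint_mult[symmetric] mult.commute)
  have Q1: "absv (Q0 * R) = 1" using Q1e qint_negb[OF b, of "Suc N"] by (simp add: c_def)
  hence R0: "R \<noteq> 0" by auto
  have Rs: "R = (\<Sum>i<p. c ^ (P * i))" unfolding R_def qint_sum by (simp add: power_mult)
  have A1: "(\<Sum>\<xi><p ^ Suc N. f \<xi> * c ^ \<xi>) = (\<Sum>i<p. \<Sum>\<xi><P. f (\<xi> + P * i) * c ^ (\<xi> + P * i))"
  proof -
    have "p ^ Suc N = P * p" unfolding P_def by simp
    thus ?thesis by (simp only: sum_split)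
  qed
  have A0: "(\<Sum>\<xi><P. f \<xi> * c ^ \<xi>) * R = (\<Sum>i<p. \<Sum>\<xi><P. f \<xi> * c ^ (\<xi> + P * i))"
    unfolding Rs sum_distrib_left sum_distrib_right
    by (simp add: power_add mult.assoc)
  have "Sq b f (Suc N) - Sq b f N
      = ((\<Sum>\<xi><p ^ Suc N. f \<xi> * c ^ \<xi>) - (\<Sum>\<xi><P. f \<xi> * c ^ \<xi>) * R) / (Q0 * R)"
    unfolding Sq_def Q1e[unfolded c_def] using R0 Q0
    by (simp add: c_def P_def Q0_def field_simps diff_divide_distrib)
  also have "\<dots> = (\<Sum>i<p. \<Sum>\<xi><P. (f (\<xi> + P * i) - f \<xi>) * c ^ (\<xi> + P * i)) / (Q0 * R)"
    unfolding A1 A0 by (simp add: sum_subtractf left_diff_distrib)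
  finally have e: "Sq b f (Suc N) - Sq b f N = \<dots>" .
  have cc: "absv c = 1" unfolding c_def using av_one b rho2 by simp
  have "absv (\<Sum>i<p. \<Sum>\<xi><P. (f (\<xi> + P * i) - f \<xi>) * c ^ (\<xi> + P * i)) \<le> \<rho> ^ N"
    by (intro av_sum) (simp_all add: av_mult av_power cc P_def goodD2[OF g] rho0)
  thus ?thesis unfolding e av_divide Q1 by simp
qed

lemma Sq_cauchy: assumes g: "good f" and b: "absv (b - 1) \<le> \<rho>"
  shows "n \<le> m \<Longrightarrow> absv (Sq b f m - Sq b f n) \<le> \<rho> ^ n"
proof (induction m rule: dec_induct)
  case base thus ?case by (simp add: rho0)
next
  case (step m)
  have "absv (Sq b f (Suc m) - Sq b f m) \<le> \<rho> ^ m" by (rule Sq_step[OF g b])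
  also have "\<rho> ^ m \<le> \<rho> ^ n" using step rho0 rho2 by (simp add: power_decreasing)
  finally have "absv (Sq b f (Suc m) - Sq b f m) \<le> \<rho> ^ n" .
  with step have "absv ((Sq b f (Suc m) - Sq b f m) + (Sq b f m - Sq b f n)) \<le> \<rho> ^ n"
    by (intro av_le_trans)
  thus ?case by simp
qed

lemma Sq_limit: assumes g: "good f" and b: "absv (b - 1) \<le> \<rho>"
  shows "\<exists>L. \<forall>N. absv (Sq b f N - L) \<le> \<rho> ^ N"
proof -
  have "\<exists>L. (\<lambda>n. absv (Sq b f n - L)) \<longlonglongrightarrow> 0"
  proof (rule cpl[unfolded absv_complete_def, rule_format])
    fix e :: real assume "e > 0"
    then obtain M where M: "\<rho> ^ M < e" using real_arch_pow_inv rho2 by blast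
    show "\<exists>M. \<forall>m\<ge>M. \<forall>n\<ge>M. absv (Sq b f m - Sq b f n) < e"
    proof (intro exI allI impI)
      fix m n assume mn: "M \<le> m" "M \<le> n"
      have "absv (Sq b f m - Sq b f n) \<le> \<rho> ^ M"
      proof (cases "n \<le> m")
        case True
        hence "absv (Sq b f m - Sq b f n) \<le> \<rho> ^ n" by (rule Sq_cauchy[OF g b])
        also have "\<dots> \<le> \<rho> ^ M" using mn rho0 rho2 by (simp add: power_decreasing)
        finally show ?thesis .
      next
        case False
        hence "absv (Sq b f n - Sq b f m) \<le> \<rho> ^ m" by (intro Sq_cauchy[OF g b]) simp
        also have "\<dots> \<le> \<rho> ^ M" using mn rho0 rho2 by (simp add: power_decreasing)
        finally show ?thesis by (simp add: av_commute)
      qed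
      thus "absv (Sq b f m - Sq b f n) < e" using M by simp
    qed
  qed
  then obtain L where L: "(\<lambda>n. absv (Sq b f n - L)) \<longlonglongrightarrow> 0" by blast
  have "absv (Sq b f N - L) \<le> \<rho> ^ N" for N
  proof -
    have lim: "(\<lambda>m. \<rho> ^ N + absv (Sq b f m - L)) \<longlonglongrightarrow> \<rho> ^ N + 0"
      by (intro tendsto_add tendsto_const L)
    have "\<forall>m\<ge>N. absv (Sq b f N - L) \<le> \<rho> ^ N + absv (Sq b f m - L)"
    proof (intro allI impI)
      fix m assume "N \<le> m"
      hence "absv (Sq b f m - Sq b f N) \<le> \<rho> ^ N" by (rule Sq_cauchy[OF g b])
      hence "absv (Sq b f N - Sq b f m) \<le> \<rho> ^ N" by (simp add: av_commute)
      moreover have "absv ((Sq b f N - Sq b f m) + (Sq b f m - L)) \<le> absv (Sq b f N - Sq b f m) + absv (Sq b f m - L)"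
        by (rule av_tri)
      ultimately show "absv (Sq b f N - L) \<le> \<rho> ^ N + absv (Sq b f m - L)" by simp
    qed
    hence "absv (Sq b f N - L) \<le> \<rho> ^ N + 0" by (intro LIMSEQ_le_const[OF lim]) blast
    thus ?thesis by simp
  qed
  thus ?thesis by blast
qed

lemma ferm_eq: assumes "\<forall>N. absv (Sq b f N - L) \<le> \<rho> ^ N"
  shows "ferm_int absv p b f = L"
proof -
  have rl: "(\<lambda>N. \<rho> ^ N) \<longlonglongrightarrow> 0" using rho0 rho2 by (intro LIMSEQ_power_zero) simp
  have cL: "(\<lambda>N. absv (Sq b f N - L)) \<longlonglongrightarrow> 0"
    by (rule tendsto_sandwich[of "\<lambda>_. 0" _ sequentially "\<lambda>N. \<rho> ^ N"]) (use assms rl in auto)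
  show ?thesis unfolding ferm_int_def
  proof (rule the_equality)
    show "(\<lambda>N. absv ((\<Sum>\<xi><p ^ N. f \<xi> * (- b) ^ \<xi>) / qint (- b) (p ^ N) - L)) \<longlonglongrightarrow> 0"
      using cL unfolding Sq_def .
  next
    fix L' assume "(\<lambda>N. absv ((\<Sum>\<xi><p ^ N. f \<xi> * (- b) ^ \<xi>) / qint (- b) (p ^ N) - L')) \<longlonglongrightarrow> 0"
    hence cL': "(\<lambda>N. absv (Sq b f N - L')) \<longlonglongrightarrow> 0" unfolding Sq_def .
    have lim: "(\<lambda>N. absv (Sq b f N - L') + absv (Sq b f N - L)) \<longlonglongrightarrow> 0 + 0"
      by (intro tendsto_add cL cL')
    have "\<forall>N. absv (L' - L) \<le> absv (Sq b f N - L') + absv (Sq b f N - L)"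
    proof
      fix N
      have "absv (-(Sq b f N - L') + (Sq b f N - L)) \<le> absv (-(Sq b f N - L')) + absv (Sq b f N - L)" by (rule av_tri)
      thus "absv (L' - L) \<le> absv (Sq b f N - L') + absv (Sq b f N - L)" by (simp add: av_commute[of L'])
    qed
    hence "absv (L' - L) \<le> 0 + 0" by (intro LIMSEQ_le_const[OF lim]) blast
    hence "absv (L' - L) = 0" using av_nonneg[of "L' - L"] by linarith
    thus "L' = L" by simp
  qed
qed

lemma ferm_bound: assumes "good f" "absv (b - 1) \<le> \<rho>"
  shows "absv (Sq b f N - ferm_int absv p b f) \<le> \<rho> ^ N"
proof -
  obtain L where "\<forall>N. absv (Sq b f N - L) \<le> \<rho> ^ N" using Sq_limit[OF assms] by blast
  moreover from this have "ferm_int absv p b f = L" by (rule ferm_eq)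
  ultimately show ?thesis by simp
qed


lemma inv_close: assumes "absv (a - 1) \<le> \<rho>" shows "absv (inverse a - 1) \<le> \<rho>"
proof -
  have a1: "absv a = 1" using av_one assms rho2 by simp
  hence "a \<noteq> 0" by auto
  hence "inverse a - 1 = - (a - 1) / a" by (simp add: field_simps)
  thus ?thesis using assms a1 by (simp add: av_divide av_commute[of 1 a])
qed

lemma qint_inv: "(u::'a) \<noteq> 0 \<Longrightarrow> u ^ x * qint (inverse u) x = u * qint u x"
proof (induction x)
  case (Suc x)
  have "u ^ Suc x * qint (inverse u) (Suc x) = u ^ Suc x + u ^ x * qint (inverse u) x"
    using Suc.prems by (simp add: qint_Suc distrib_left)
  also have "\<dots> = u * qint u (x + 1)" using Suc by (simp only: qint_add) (simp add: algebra_simps qint_sum)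
  finally show ?case by simp
qed simp

lemma pow_diff: assumes "absv a \<le> 1" "absv b \<le> 1" "absv (a - b) \<le> r"
  shows "absv (a ^ n - b ^ n) \<le> r"
proof (induction n)
  case 0 thus ?case using assms order.trans[OF av_nonneg assms(3)] by simp
next
  case (Suc n)
  show ?case using prod_close[of b "b ^ n" a "a ^ n" r] assms Suc
    by (simp add: av_power power_le_one)
qed

lemma m1_pow: "even (a + b) \<Longrightarrow> (-1::'a) ^ a = (-1) ^ b"
  by (metis (no_types, lifting) even_add neg_one_even_power neg_one_odd_power)


lemma approx:
  assumes qu: "absv (u - 1) \<le> \<rho>" and qw: "absv (w - 1) \<le> \<rho>" and xy: "x + y = p ^ N + 1"
  shows "absv (w ^ y * qint u y ^ K * (1 - qint u y) ^ M
           - w * inverse w ^ x * qint (inverse u) x ^ M * (1 - qint (inverse u) x) ^ K) \<le> \<rho> ^ N"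
proof -
  have u1: "absv u = 1" using av_one qu rho2 by simp
  have w1: "absv w = 1" using av_one qw rho2 by simp
  have u0: "u \<noteq> 0" and w0: "w \<noteq> 0" using u1 w1 by auto
  define cy where "cy = qint u y"
  define dx where "dx = qint (inverse u) x"
  define P where "P = p ^ N"
  have e1: "qint u (x + y) = qint u x + u ^ x * cy" unfolding cy_def by (rule qint_add)
  have e2: "qint u (x + y) = 1 + u * qint u P" unfolding xy P_def by (simp add: qint_Suc)
  have e3: "u ^ x * dx = u * qint u x" unfolding dx_def using u0 by (rule qint_inv)
  have e4: "u ^ x - 1 = (u - 1) * qint u x" by (rule pow_m1)
  have key: "u ^ x * (cy - (1 - dx)) = u * qint u P"
  proof -
    have "u ^ x * (cy - (1 - dx)) = u ^ x * cy - u ^ x + u ^ x * dx" by (simp add: algebra_simps)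
    also have "\<dots> = (1 + u * qint u P - qint u x) - u ^ x + u * qint u x" using e1 e2 e3 by simp
    also have "\<dots> = u * qint u P - (u ^ x - 1) + (u - 1) * qint u x" by (simp add: algebra_simps)
    also have "\<dots> = u * qint u P" using e4 by simp
    finally show ?thesis .
  qed
  have c1: "absv (cy - (1 - dx)) \<le> \<rho> ^ N"
  proof -
    have "absv (u ^ x * (cy - (1 - dx))) = absv (cy - (1 - dx))" by (simp add: av_mult av_power u1)
    hence "absv (cy - (1 - dx)) = absv (qint u P)" using key by (simp add: av_mult u1)
    also have "\<dots> \<le> \<rho> ^ N" using qint_ppow[OF qu, of N 1] by (simp add: P_def)
    finally show ?thesis .
  qed
  have c2: "absv ((1 - cy) - dx) \<le> \<rho> ^ N"
  proof -
    have "(1 - cy) - dx = - (cy - (1 - dx))" by simp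
    thus ?thesis using c1 by (simp only: av_minus)
  qed
  have keyw: "w ^ x * (w ^ y - w * inverse w ^ x) = w * (w ^ P - 1)"
  proof -
    have "w ^ x * w ^ y = w * w ^ P" unfolding power_add[symmetric] xy P_def by simp
    moreover have "w ^ x * (w * inverse w ^ x) = w" using w0 by (simp add: power_inverse field_simps)
    ultimately show ?thesis by (simp add: algebra_simps)
  qed
  have c3: "absv (w ^ y - w * inverse w ^ x) \<le> \<rho> ^ N"
  proof -
    have "absv (w ^ y - w * inverse w ^ x) = absv (w ^ P - 1)"
      using arg_cong[OF keyw, of absv] by (simp add: av_mult av_power w1)
    also have "\<dots> \<le> \<rho> ^ N" using pow_ppow[OF qw, of N 1] by (simp add: P_def)
    finally show ?thesis .
  qed
  have bcy: "absv cy \<le> 1" unfolding cy_def by (rule qint_le1) (simp add: u1)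
  have bdx: "absv dx \<le> 1" unfolding dx_def by (rule qint_le1) (simp add: av_inverse u1)
  have bcy': "absv (1 - cy) \<le> 1" using bcy by (intro av_le_diff) simp_all
  have bdx': "absv (1 - dx) \<le> 1" using bdx by (intro av_le_diff) simp_all
  have bw1: "absv (w ^ y) \<le> 1" by (simp add: av_power w1)
  have bw2: "absv (w * inverse w ^ x) \<le> 1" by (simp add: av_mult av_power av_inverse w1)
  have p1: "absv (cy ^ K - (1 - dx) ^ K) \<le> \<rho> ^ N" using bcy bdx' c1 by (rule pow_diff)
  have p2: "absv ((1 - cy) ^ M - dx ^ M) \<le> \<rho> ^ N" using bcy' bdx c2 by (rule pow_diff)
  have q1: "absv (w ^ y * cy ^ K - (w * inverse w ^ x) * (1 - dx) ^ K) \<le> \<rho> ^ N"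
    by (rule prod_close) (use bw1 bw2 bcy bdx' c3 p1 in \<open>simp_all add: av_power power_le_one\<close>)
  have q2: "absv (w ^ y * cy ^ K * (1 - cy) ^ M - (w * inverse w ^ x) * (1 - dx) ^ K * dx ^ M) \<le> \<rho> ^ N"
    by (rule prod_close) (use bw1 bw2 bcy bdx' bcy' bdx q1 p2 in \<open>simp_all add: av_power av_mult power_le_one mult_le_one\<close>)
  thus ?thesis unfolding cy_def dx_def by (simp add: ac_simps)
qed


lemma shift2: "(\<Sum>\<xi><P. h \<xi>) + h P + h (Suc P) = h 0 + h 1 + (\<Sum>\<eta><P. h (\<eta> + 2))"
  for h :: "nat \<Rightarrow> 'a"
proof -
  have "(\<Sum>\<xi><Suc (Suc P). h \<xi>) = (\<Sum>\<xi><P. h \<xi>) + h P + h (Suc P)" by simp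
  moreover have "(\<Sum>\<xi><Suc (Suc P). h \<xi>) = h 0 + h 1 + (\<Sum>\<eta><P. h (\<eta> + 2))"
    unfolding sum.lessThan_Suc_shift by (simp add: add.assoc)
  ultimately show ?thesis by simp
qed

lemma core:
  fixes q u w :: 'a and K M :: nat
  assumes qq: "absv (q - 1) \<le> \<rho>" and qu: "absv (u - 1) \<le> \<rho>" and qw: "absv (w - 1) \<le> \<rho>"
    and M: "M \<ge> 1"
  defines "F \<equiv> \<lambda>\<xi>. w ^ \<xi> * qint u \<xi> ^ K * (1 - qint u \<xi>) ^ M"
    and "G \<equiv> \<lambda>\<xi>. inverse w ^ \<xi> * qint (inverse u) \<xi> ^ M * (1 - qint (inverse u) \<xi>) ^ K"
  shows "absv (Sq q F N - q ^ 2 * w * Sq (inverse q) G N - F 0 * (1 + q)) \<le> \<rho> ^ N"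
proof -
  define P where "P = p ^ N"
  define c where "c = - q"
  have oP: "odd P" unfolding P_def by (rule odd_pN)
  hence P1: "P \<ge> 1" by (cases P) auto
  have q1: "absv q = 1" using av_one qq rho2 by simp
  hence q0: "q \<noteq> 0" by auto
  have iqq: "absv (inverse q - 1) \<le> \<rho>" by (rule inv_close[OF qq])
  have Qe: "qint (- q) P = (1 + q ^ P) / (1 + q)" and Qa: "absv (qint (- q) P) = 1"
    using qint_negb[OF qq, of N] by (simp_all add: P_def)
  have Q'e: "qint (- inverse q) P = (1 + inverse q ^ P) / (1 + inverse q)"
    using qint_negb[OF iqq, of N] by (simp_all add: P_def)
  have qa: "absv (1 + q) = 1" using qq rho2 by (intro av_1plus) simp
  have qb: "absv (1 + inverse q) = 1" using iqq rho2 by (intro av_1plus) simp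
  have qa0: "1 + q \<noteq> 0" and qb0: "1 + inverse q \<noteq> 0" using qa qb by auto
  define Q where "Q = qint (- q) P"
  have Q0: "Q \<noteq> 0" using Qa unfolding Q_def by auto
  have QQ: "qint (- inverse q) P * q ^ (P - 1) = Q"
  proof -
    have Pe: "P = Suc (P - 1)" using P1 by simp
    define r where "r = q ^ (P - 1)"
    have "q ^ P = q * r" unfolding r_def by (subst Pe) simp
    moreover have "inverse q ^ P = inverse q * inverse r" unfolding r_def
      by (subst Pe) (simp add: power_inverse)
    moreover have r0: "r \<noteq> 0" unfolding r_def using q0 by simp
    ultimately have h1: "1 + inverse q ^ P = (q * r + 1) / (q * r)" and h2: "1 + q ^ P = q * r + 1"
      using q0 by (simp_all add: field_simps)
    have h3: "1 + inverse q = (q + 1) / q" using q0 by (simp add: field_simps)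
    have qa1: "q + 1 \<noteq> 0" using qa0 by (simp add: add.commute)
    have "(q * r + 1) / (q * r) / ((q + 1) / q) * r = (q * r + 1) * (q * r) / ((q * r) * (q + 1))"
      using q0 r0 qa1 by (simp add: divide_simps)
    also have "\<dots> = (q * r + 1) / (q + 1)" using q0 r0 by simp
    finally have "(q * r + 1) / (q * r) / ((q + 1) / q) * r = (q * r + 1) / (q + 1)" .
    thus ?thesis unfolding Q'e Q_def Qe r_def[symmetric] h1 h2 h3 by (simp add: add.commute)
  qed
  have tm: "(- inverse q) ^ (P - Suc \<eta>) * q ^ (P - 1) = c ^ \<eta>" if "\<eta> < P" for \<eta>
  proof -
    define a where "a = P - Suc \<eta>"
    have ae: "P - 1 = a + \<eta>" unfolding a_def using that by simp
    have "even (P - 1)" using oP P1 by (simp add: even_diff_nat)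
    hence ev: "even (a + \<eta>)" using ae by (simp only:)
    have "(- inverse q) ^ a * q ^ (P - 1) = (-1) ^ a * (inverse q ^ a * q ^ a) * q ^ \<eta>"
      by (simp only: ae power_add power_minus[of "inverse q"] mult_ac)
    also have "inverse q ^ a * q ^ a = 1" using q0 by (simp add: power_inverse)
    also have "(-1) ^ a = ((-1) ^ \<eta> :: 'a)" by (rule m1_pow[OF ev])
    finally have "(- inverse q) ^ a * q ^ (P - 1) = (-1) ^ \<eta> * q ^ \<eta>" by simp
    thus ?thesis unfolding a_def c_def by (simp only: power_minus[of q])
  qed
  have refl: "Q * Sq (inverse q) G N = (\<Sum>\<eta><P. G (P - Suc \<eta>) * c ^ \<eta>)"
  proof -
    have "(\<Sum>\<xi><P. G \<xi> * (- inverse q) ^ \<xi>) = (\<Sum>\<eta><P. G (P - Suc \<eta>) * (- inverse q) ^ (P - Suc \<eta>))"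
      by (rule sum.nat_diff_reindex[symmetric])
    hence "(\<Sum>\<xi><P. G \<xi> * (- inverse q) ^ \<xi>) * q ^ (P - 1) = (\<Sum>\<eta><P. G (P - Suc \<eta>) * ((- inverse q) ^ (P - Suc \<eta>) * q ^ (P - 1)))"
      by (simp only: sum_distrib_right mult.assoc)
    also have "\<dots> = (\<Sum>\<eta><P. G (P - Suc \<eta>) * c ^ \<eta>)"
      by (rule sum.cong[OF refl]) (simp only: tm lessThan_iff)
    moreover have "Q * Sq (inverse q) G N = (\<Sum>\<xi><P. G \<xi> * (- inverse q) ^ \<xi>) * q ^ (P - 1)"
    proof -
      define Q' where "Q' = qint (- inverse q) P"
      have Q'0: "Q' \<noteq> 0" using Q0 QQ unfolding Q'_def by auto
      have "Q * Sq (inverse q) G N = (Q' * q ^ (P - 1)) * ((\<Sum>\<xi><P. G \<xi> * (- inverse q) ^ \<xi>) / Q')"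
        unfolding Sq_def P_def[symmetric] Q'_def QQ ..
      also have "\<dots> = (\<Sum>\<xi><P. G \<xi> * (- inverse q) ^ \<xi>) * q ^ (P - 1)" using Q'0 by simp
      finally show ?thesis .
    qed
    ultimately show ?thesis by simp
  qed
  have FS: "Q * Sq q F N = (\<Sum>\<xi><P. F \<xi> * c ^ \<xi>)"
    unfolding Sq_def P_def[symmetric] Q_def[symmetric] c_def using Q0 by simp
  have F1: "F 1 = 0" unfolding F_def using M by (simp add: qint_sum)
  have sh: "(\<Sum>\<xi><P. F \<xi> * c ^ \<xi>) = F 0 + (\<Sum>\<eta><P. F (\<eta> + 2) * c ^ (\<eta> + 2)) - F P * c ^ P - F (Suc P) * c ^ Suc P"
    using shift2[of "\<lambda>\<xi>. F \<xi> * c ^ \<xi>" P] F1 by (simp add: algebra_simps)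
  have cP: "c ^ P = - (q ^ P)" unfolding c_def using oP by (simp add: power_minus_odd)
  have cP1: "c ^ Suc P = q ^ Suc P" unfolding c_def using oP by simp
  have c2: "c ^ 2 = q ^ 2" "c * c = q ^ 2" unfolding c_def by (simp_all add: power2_eq_square)
  define E where "E = (\<Sum>\<eta><P. c ^ (\<eta> + 2) * (F (\<eta> + 2) - w * G (P - Suc \<eta>)))"
  have D: "Q * (q ^ 2 * w * Sq (inverse q) G N) = (\<Sum>\<eta><P. c ^ (\<eta> + 2) * (w * G (P - Suc \<eta>)))"
  proof -
    have "Q * (q ^ 2 * w * Sq (inverse q) G N) = q ^ 2 * w * (Q * Sq (inverse q) G N)" by simp
    also have "\<dots> = (\<Sum>\<eta><P. c ^ (\<eta> + 2) * (w * G (P - Suc \<eta>)))"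
      unfolding refl sum_distrib_left by (rule sum.cong) (simp_all add: c2 power_add mult_ac)
    finally show ?thesis .
  qed
  have QF: "Q * (F 0 * (1 + q)) = F 0 * (1 + q ^ P)" unfolding Q_def Qe using qa0 by simp
  have main: "Q * (Sq q F N - q ^ 2 * w * Sq (inverse q) G N - F 0 * (1 + q))
        = q ^ P * (F (0 + p ^ N * 1) - F 0) - q ^ Suc P * (F (1 + p ^ N * 1) - F 1) + E"
  proof -
    have "Q * (Sq q F N - q ^ 2 * w * Sq (inverse q) G N - F 0 * (1 + q))
        = Q * Sq q F N - Q * (q ^ 2 * w * Sq (inverse q) G N) - Q * (F 0 * (1 + q))"
      by (simp add: algebra_simps)
    also have "\<dots> = F 0 + (\<Sum>\<eta><P. F (\<eta> + 2) * c ^ (\<eta> + 2)) - F P * c ^ P - F (Suc P) * c ^ Suc P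
         - (\<Sum>\<eta><P. c ^ (\<eta> + 2) * (w * G (P - Suc \<eta>))) - F 0 * (1 + q ^ P)"
      unfolding FS D QF sh ..
    also have "\<dots> = q ^ P * (F P - F 0) - q ^ Suc P * F (Suc P) + E"
      unfolding E_def cP cP1 by (simp add: algebra_simps sum_subtractf)
    finally show ?thesis using F1 by (simp add: P_def)
  qed
  have gF: "good F" unfolding F_def
    by (intro good_mult good_pow good_1m good_exp good_qint qu qw)
  have b1: "absv (q ^ P * (F (0 + p ^ N * 1) - F 0)) \<le> \<rho> ^ N"
    using goodD2[OF gF, of 0 N 1] by (simp add: av_mult av_power q1)
  have b2: "absv (q ^ Suc P * (F (1 + p ^ N * 1) - F 1)) \<le> \<rho> ^ N"
    using goodD2[OF gF, of 1 N 1] by (simp add: av_mult av_power q1 del: power_Suc)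
  have cc: "absv c = 1" unfolding c_def using q1 by simp
  have b3: "absv E \<le> \<rho> ^ N" unfolding E_def
  proof (rule av_sum)
    fix \<eta> assume "\<eta> \<in> {..<P}"
    hence "P - Suc \<eta> + (\<eta> + 2) = p ^ N + 1" unfolding P_def by simp
    from approx[OF qu qw this, of K M]
    have "absv (F (\<eta> + 2) - w * G (P - Suc \<eta>)) \<le> \<rho> ^ N" unfolding F_def G_def by (simp add: mult.assoc)
    thus "absv (c ^ (\<eta> + 2) * (F (\<eta> + 2) - w * G (P - Suc \<eta>))) \<le> \<rho> ^ N"
      by (simp add: av_mult av_power cc)
  qed (simp add: rho0)
  have "absv (Q * (Sq q F N - q ^ 2 * w * Sq (inverse q) G N - F 0 * (1 + q))) \<le> \<rho> ^ N"
    unfolding main by (intro av_le_trans av_le_diff b1 b2 b3)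
  thus ?thesis using Qa unfolding Q_def by (simp add: av_mult)
qed


lemma Sq_lin: "Sq b (\<lambda>\<xi>. \<Sum>l\<in>A. a l * f l \<xi>) N = (\<Sum>l\<in>A. a l * Sq b (f l) N)"
proof -
  have "(\<Sum>\<xi><p ^ N. (\<Sum>l\<in>A. a l * f l \<xi>) * (- b) ^ \<xi>) = (\<Sum>l\<in>A. a l * (\<Sum>\<xi><p ^ N. f l \<xi> * (- b) ^ \<xi>))"
    by (simp add: sum_distrib_right sum_distrib_left mult.assoc sum.swap[of _ "{..<p ^ N}"])
  thus ?thesis unfolding Sq_def by (simp add: sum_divide_distrib[symmetric])
qed

lemma lin_bound: assumes "\<And>l. l \<in> A \<Longrightarrow> absv (a l) \<le> 1" "\<And>l. l \<in> A \<Longrightarrow> absv (X l - Y l) \<le> r" "0 \<le> r"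
  shows "absv ((\<Sum>l\<in>A. a l * X l) - (\<Sum>l\<in>A. a l * Y l)) \<le> r"
proof -
  have "(\<Sum>l\<in>A. a l * X l) - (\<Sum>l\<in>A. a l * Y l) = (\<Sum>l\<in>A. a l * (X l - Y l))"
    by (simp add: sum_subtractf right_diff_distrib)
  also have "absv \<dots> \<le> r"
  proof (rule av_sum)
    fix l assume l: "l \<in> A"
    have "absv (a l) * absv (X l - Y l) \<le> 1 * r" using assms l by (intro mult_mono) auto
    thus "absv (a l * (X l - Y l)) \<le> r" by (simp add: av_mult)
  qed (rule assms(3))
  finally show ?thesis .
qed

lemma zero_bound: assumes "\<And>N. absv x \<le> \<rho> ^ N" shows "x = 0"
proof -
  have rl: "(\<lambda>N. \<rho> ^ N) \<longlonglongrightarrow> 0" using rho0 rho2 by (intro LIMSEQ_power_zero) simp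
  have "absv x \<le> 0" by (rule LIMSEQ_le_const[OF rl]) (use assms in blast)
  thus ?thesis using av_nonneg[of x] by simp
qed

lemma coef_le1: "absv (of_nat m * (-1) ^ l :: 'a) \<le> 1"
  by (simp add: av_mult av_power av_of_nat_le1)


lemma main_loc:
  fixes q :: 'a and \<alpha> h K M :: nat
  assumes qq: "absv (q - 1) \<le> \<rho>" and h1: "h \<ge> 1" and M1: "M \<ge> 1"
  shows "(\<Sum>l=0..M. of_nat (M choose l) * (-1) ^ l * genocchi absv p \<alpha> h q (l + K + 1) / of_nat (l + K + 1))
       = (if K = 0 then (1 + q) + q ^ (h + 1) * genocchi absv p \<alpha> h (inverse q) (M + K + 1) / of_nat (M + K + 1)
          else (\<Sum>l=0..K. of_nat (K choose l) * (-1) ^ (K + l) *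
                 ((1 + q) + q ^ (h + 1) * genocchi absv p \<alpha> h (inverse q) (M + K - l + 1) / of_nat (M + K - l + 1))))"
    (is "?L = ?R")
proof -
  define u where "u = q ^ \<alpha>"
  define w where "w = q ^ (h - 1)"
  have q1: "absv q = 1" using av_one qq rho2 by simp
  have uq: "absv (u - 1) \<le> \<rho>" unfolding u_def using pow_close[of q \<alpha>] q1 qq by simp
  have wq: "absv (w - 1) \<le> \<rho>" unfolding w_def using pow_close[of q "h - 1"] q1 qq by simp
  have iqq: "absv (inverse q - 1) \<le> \<rho>" by (rule inv_close[OF qq])
  define f where "f n = (\<lambda>\<xi>. w ^ \<xi> * qint u \<xi> ^ n)" for n
  define g where "g n = (\<lambda>\<xi>. inverse w ^ \<xi> * qint (inverse u) \<xi> ^ n)" for n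
  have gen_q: "genocchi absv p \<alpha> h q (n + 1) / of_nat (n + 1) = ferm_int absv p q (f n)" for n
    unfolding f_def u_def w_def by (simp add: power_mult del: of_nat_Suc)
  have gen_iq: "genocchi absv p \<alpha> h (inverse q) (n + 1) / of_nat (n + 1) = ferm_int absv p (inverse q) (g n)" for n
    unfolding g_def u_def w_def by (simp add: power_mult power_inverse del: of_nat_Suc)
  have gf: "good (f n)" for n unfolding f_def by (intro good_mult good_pow good_exp good_qint uq wq)
  have gg: "good (g n)" for n unfolding g_def
    by (intro good_mult good_pow good_exp good_qint inv_close uq wq)
  have Ib: "absv (Sq q (f n) N - ferm_int absv p q (f n)) \<le> \<rho> ^ N" for n N by (rule ferm_bound[OF gf qq])
  have Jb: "absv (Sq (inverse q) (g n) N - ferm_int absv p (inverse q) (g n)) \<le> \<rho> ^ N" for n N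
    by (rule ferm_bound[OF gg iqq])
  define F where "F = (\<lambda>\<xi>. w ^ \<xi> * qint u \<xi> ^ K * (1 - qint u \<xi>) ^ M)"
  define G where "G = (\<lambda>\<xi>. inverse w ^ \<xi> * qint (inverse u) \<xi> ^ M * (1 - qint (inverse u) \<xi>) ^ K)"
  have core': "absv (Sq q F N - q ^ 2 * w * Sq (inverse q) G N - F 0 * (1 + q)) \<le> \<rho> ^ N" for N
    unfolding F_def G_def by (rule core[OF qq uq wq M1])
  define a where "a l = (of_nat (M choose l) * (-1) ^ l :: 'a)" for l
  have Fdec: "F = (\<lambda>\<xi>. \<Sum>l\<in>{0..M}. a l * f (l + K) \<xi>)"
  proof
    fix \<xi>
    have "(1 - qint u \<xi>) ^ M = (- qint u \<xi> + 1) ^ M" by simp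
    also have "\<dots> = (\<Sum>l\<le>M. of_nat (M choose l) * (- qint u \<xi>) ^ l * 1 ^ (M - l))" by (rule binomial_ring)
    finally have "(1 - qint u \<xi>) ^ M = (\<Sum>l\<in>{0..M}. a l * qint u \<xi> ^ l)"
      unfolding a_def by (simp add: atLeast0AtMost power_minus[of "qint u \<xi>"] mult_ac)
    thus "F \<xi> = (\<Sum>l\<in>{0..M}. a l * f (l + K) \<xi>)"
      unfolding F_def f_def by (simp add: sum_distrib_left power_add mult_ac)
  qed
  have Leq: "?L = (\<Sum>l\<in>{0..M}. a l * ferm_int absv p q (f (l + K)))"
    unfolding a_def by (rule sum.cong[OF refl]) (simp add: gen_q[symmetric] mult.assoc)
  have Lb: "absv (?L - Sq q F N) \<le> \<rho> ^ N" for N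
  proof -
    have "absv ((\<Sum>l\<in>{0..M}. a l * ferm_int absv p q (f (l + K))) - (\<Sum>l\<in>{0..M}. a l * Sq q (f (l + K)) N)) \<le> \<rho> ^ N"
      by (rule lin_bound) (simp_all add: a_def coef_le1 rho0 av_commute[of "ferm_int absv p q _"] Ib)
    thus ?thesis unfolding Leq Fdec Sq_lin .
  qed
  obtain JG where RJ: "?R = F 0 * (1 + q) + q ^ (h + 1) * JG" and JGb: "\<And>N. absv (Sq (inverse q) G N - JG) \<le> \<rho> ^ N"
  proof (cases "K = 0")
    case True
    have "G = g M" unfolding G_def g_def True by simp
    moreover have "?R = F 0 * (1 + q) + q ^ (h + 1) * ferm_int absv p (inverse q) (g M)"
    proof -
      have "?R = (1 + q) + q ^ (h + 1) * (genocchi absv p \<alpha> h (inverse q) (M + 1) / of_nat (M + 1))"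
        using True by (simp only: if_True add_0_right times_divide_eq_right refl)
      also have "\<dots> = F 0 * (1 + q) + q ^ (h + 1) * ferm_int absv p (inverse q) (g M)"
        unfolding gen_iq F_def using True by simp
      finally show ?thesis .
    qed
    ultimately show ?thesis using that Jb by blast
  next
    case False
    define b where "b l = (of_nat (K choose l) * (-1) ^ (K + l) :: 'a)" for l
    have bsum: "(\<Sum>l\<in>{0..K}. b l) = 0"
    proof -
      have "(\<Sum>l\<in>{0..K}. b l) = (-1) ^ K * (\<Sum>l\<le>K. (-1) ^ l * of_nat (K choose l))"
        unfolding b_def by (simp add: atLeast0AtMost sum_distrib_left power_add mult_ac)
      also have "\<dots> = 0" using False by (simp add: choose_alternating_sum)
      finally show ?thesis .
    qed
    have Gdec: "G = (\<lambda>\<xi>. \<Sum>l\<in>{0..K}. b l * g (M + K - l) \<xi>)"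
    proof
      fix \<xi>
      define d where "d = qint (inverse u) \<xi>"
      have "(d - 1) ^ K = (-1 + d) ^ K" by simp
      also have "\<dots> = (\<Sum>l\<le>K. of_nat (K choose l) * (-1) ^ l * d ^ (K - l))" by (rule binomial_ring)
      finally have e: "(d - 1) ^ K = \<dots>" .
      have "(1 - d) ^ K = (-1) ^ K * (d - 1) ^ K"
        by (metis minus_diff_eq power_minus)
      also have "\<dots> = (\<Sum>l\<in>{0..K}. b l * d ^ (K - l))"
        unfolding e b_def by (simp add: atLeast0AtMost sum_distrib_left power_add mult_ac)
      finally have e2: "(1 - d) ^ K = (\<Sum>l\<in>{0..K}. b l * d ^ (K - l))" .
      have "d ^ M * (1 - d) ^ K = (\<Sum>l\<in>{0..K}. b l * d ^ (M + K - l))"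
        unfolding e2 sum_distrib_left
        by (rule sum.cong[OF refl]) (auto simp: power_add[symmetric] mult_ac)
      hence "G \<xi> = inverse w ^ \<xi> * (\<Sum>l\<in>{0..K}. b l * d ^ (M + K - l))"
        unfolding G_def d_def[symmetric] by (simp add: mult_ac)
      also have "\<dots> = (\<Sum>l\<in>{0..K}. b l * g (M + K - l) \<xi>)"
        unfolding g_def d_def[symmetric] sum_distrib_left by (simp add: mult_ac)
      finally show "G \<xi> = (\<Sum>l\<in>{0..K}. b l * g (M + K - l) \<xi>)" .
    qed
    define JG where "JG = (\<Sum>l\<in>{0..K}. b l * ferm_int absv p (inverse q) (g (M + K - l)))"
    have "?R = (\<Sum>l\<in>{0..K}. b l * (1 + q)) + q ^ (h + 1) * JG"
    proof -
      have "?R = (\<Sum>l\<in>{0..K}. b l * (1 + q) + q ^ (h + 1) * (b l * ferm_int absv p (inverse q) (g (M + K - l))))"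
        using False unfolding if_not_P[OF False]
      proof (intro sum.cong refl)
        fix l
        show "of_nat (K choose l) * (-1) ^ (K + l) * ((1 + q) + q ^ (h + 1) * genocchi absv p \<alpha> h (inverse q) (M + K - l + 1) / of_nat (M + K - l + 1))
          = b l * (1 + q) + q ^ (h + 1) * (b l * ferm_int absv p (inverse q) (g (M + K - l)))"
          unfolding times_divide_eq_right[symmetric] gen_iq b_def by (simp add: algebra_simps)
      qed
      thus ?thesis unfolding JG_def by (simp add: sum.distrib sum_distrib_left)
    qed
    hence "?R = F 0 * (1 + q) + q ^ (h + 1) * JG"
      using False by (simp add: F_def bsum sum_distrib_right[symmetric])
    moreover have "absv (Sq (inverse q) G N - JG) \<le> \<rho> ^ N" for N
    proof -
      have "absv ((\<Sum>l\<in>{0..K}. b l * Sq (inverse q) (g (M + K - l)) N) - JG) \<le> \<rho> ^ N"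
        unfolding JG_def by (rule lin_bound) (simp_all add: b_def coef_le1 rho0 Jb)
      thus ?thesis unfolding Gdec Sq_lin .
    qed
    ultimately show ?thesis using that by blast
  qed
  have hw: "q ^ (h + 1) = q ^ 2 * w" unfolding w_def using h1
    by (simp add: power_add[symmetric])
  have "absv (?L - ?R) \<le> \<rho> ^ N" for N
  proof -
    have e: "?L - ?R = (?L - Sq q F N) + (Sq q F N - q ^ 2 * w * Sq (inverse q) G N - F 0 * (1 + q))
              + q ^ 2 * w * (Sq (inverse q) G N - JG)"
    proof -
      have R2: "?R = F 0 * (1 + q) + q ^ 2 * w * JG" unfolding RJ by (simp only: hw)
      have ge: "X - (A + B * C) = (X - S) + (S - B * T - A) + B * (T - C)" for X A B C S T :: 'a
        by (simp add: algebra_simps)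
      show ?thesis unfolding R2 by (rule ge)
    qed
    have "absv (q ^ 2 * w * (Sq (inverse q) G N - JG)) \<le> \<rho> ^ N"
      using JGb[of N] wq rho2 av_one[of w] by (simp add: av_mult av_power q1)
    thus ?thesis unfolding e by (intro av_le_trans Lb core')
  qed
  thus ?thesis by (subst eq_iff_diff_eq_0) (rule zero_bound)
qed

end

theorem mainTheorem8:
  fixes absv :: "'a::field_char_0 \<Rightarrow> real" and p :: nat and q :: 'a
    and \<alpha> h s k :: nat and n :: "nat \<Rightarrow> nat"
  assumes "prime p" and "odd p" and "Cp_field absv p"
    and "absv (q - 1) < 1" and "h \<ge> 1" and "s \<ge> 2"
    and "(\<Sum>d=1..s. n d) > s * k"
  shows "(\<Sum>l=0..(\<Sum>d=1..s. n d) - s * k.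
            of_nat (((\<Sum>d=1..s. n d) - s * k) choose l) * (-1) ^ l
            * genocchi absv p \<alpha> h q (l + s * k + 1) / of_nat (l + s * k + 1))
       = (if k = 0 then
            (1 + q) + q ^ (h + 1) * genocchi absv p \<alpha> h (inverse q) ((\<Sum>d=1..s. n d) + 1)
                        / of_nat ((\<Sum>d=1..s. n d) + 1)
          else
            (\<Sum>l=0..s * k. of_nat ((s * k) choose l) * (-1) ^ (s * k + l) *
               ((1 + q) + q ^ (h + 1) * genocchi absv p \<alpha> h (inverse q) ((\<Sum>d=1..s. n d) - l + 1)
                           / of_nat ((\<Sum>d=1..s. n d) - l + 1))))"
proof -
  note A = assms
  define \<rho> where "\<rho> = max (1 / real p) (absv (q - 1))"
  have p1: "p > 1" using A(1) prime_gt_1_nat by blast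
  interpret cpx absv p \<rho>
  proof
    show "nonarch_absv absv" "absv_complete absv" "absv (of_nat p) = 1 / real p"
      using A(3) unfolding Cp_field_def by auto
    show "prime p" "odd p" by (rule A(1), rule A(2))
    show "1 / real p \<le> \<rho>" unfolding \<rho>_def by simp
    show "\<rho> < 1" unfolding \<rho>_def using A(4) p1 by simp
  qed
  have qq: "absv (q - 1) \<le> \<rho>" unfolding \<rho>_def by simp
  have M1: "(\<Sum>d=1..s. n d) - s * k \<ge> 1" using A(7) by simp
  have e1: "(\<Sum>d=1..s. n d) - s * k + s * k = (\<Sum>d=1..s. n d)" using A(7) by simp
  have ks: "(s * k = 0) = (k = 0)" using A(6) by simp
  from main_loc[OF qq A(5) M1, where \<alpha>=\<alpha> and K="s * k"]
  show ?thesis unfolding e1 ks .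
qed

end
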